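(* Let $0<p\leqslant q:=1-p$, and let $\tilde f(z)$ and $\tilde g(z)$ be entire functions satisfying \[ \tilde{f}(z)=(1-e^{-pz})\tilde{f}(pz) +e^{-pz}\tilde{f}(qz) +\tilde{g}(z), \] with $\tilde f(0)=\tilde g(0)=0$. Then $\tilde f$ is JS-admissible if and only if $\tilde g$ is JS-admissible.
   Context: An entire function $\tilde f$ is called JS-admissible if the following two conditions hold for $|z|\geqslant1$ (for some small $\varepsilon>0$ and some $\varepsilon'\in(0,1)$): (I) there exist $\alpha,\beta\in\mathbb{R}$ such that, uniformly for $|\arg(z)|\leqslant\varepsilon$, $\tilde f(z)=O\left(|z|^\alpha(\log_+|z|)^\beta\right)$, where $\log_+x:=\log(1+x)$; (O) uniformly for $\varepsilon\leqslant|\arg(z)|\leqslant\pi$, $e^z\tilde f(z)=O\left(e^{(1-\varepsilon')|z|}\right)$. *)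

theory Defs
  imports "HOL-Complex_Analysis.Complex_Analysis"
begin

definition log_plus :: "real \<Rightarrow> real" where
  "log_plus x = ln (1 + x)"

definition JS_admissible :: "(complex \<Rightarrow> complex) \<Rightarrow> bool" where
  "JS_admissible f \<longleftrightarrow> f holomorphic_on UNIV \<and>
     (\<exists>\<epsilon>>0. \<exists>\<epsilon>'. 0 < \<epsilon>' \<and> \<epsilon>' < 1 \<and>
       (\<exists>\<alpha> \<beta> :: real. \<exists>C1. \<forall>z. norm z \<ge> 1 \<and> \<bar>Arg z\<bar> \<le> \<epsilon> \<longrightarrow>
            norm (f z) \<le> C1 * norm z powr \<alpha> * log_plus (norm z) powr \<beta>) \<and>
       (\<exists>C2. \<forall>z. norm z \<ge> 1 \<and> \<epsilon> \<le> \<bar>Arg z\<bar> \<and> \<bar>Arg z\<bar> \<le> pi \<longrightarrow>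
            norm (exp z * f z) \<le> C2 * exp ((1 - \<epsilon>') * norm z)))"

end

theory Submission
  imports Defs
begin


lemma Re_ge_sector:
  assumes "\<bar>Arg z\<bar> \<le> e" "e \<le> pi"
  shows "norm z * cos e \<le> Re z"
proof (cases "z = 0")
  case True then show ?thesis by simp
next
  case False
  have "cos e \<le> cos \<bar>Arg z\<bar>" by (rule cos_monotone_0_pi_le) (use assms in auto)
  also have "cos \<bar>Arg z\<bar> = Re z / norm z" using cos_Arg[OF False] by (simp add: abs_if)
  finally show ?thesis using False by (simp add: field_simps mult.commute)
qed

lemma Re_le_sector:
  assumes "e \<le> \<bar>Arg z\<bar>" "0 \<le> e"
  shows "Re z \<le> norm z * cos e"
proof (cases "z = 0")
  case True then show ?thesis by simp
next
  case False
  have "\<bar>Arg z\<bar> \<le> pi" using Arg_bounded[of z] by auto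
  then have "cos \<bar>Arg z\<bar> \<le> cos e" by (intro cos_monotone_0_pi_le) (use assms in auto)
  moreover have "cos \<bar>Arg z\<bar> = Re z / norm z" using cos_Arg[OF False] by (simp add: abs_if)
  ultimately have "cos (Arg z) \<le> cos e" "norm z * cos (Arg z) = Re z"
    using False by (auto simp: field_simps abs_if split: if_splits)
  then show ?thesis by (metis mult_left_mono norm_ge_zero)
qed

lemma poly_exp_bound:
  fixes g d :: real
  assumes "0 \<le> g" "0 < d"
  shows "\<exists>M>0. \<forall>x\<ge>0. (1+x) powr g \<le> M * exp (d*x)"
proof (cases "g = 0")
  case True then show ?thesis using assms by (intro exI[of _ 1]) auto
next
  case False
  with assms have g: "g > 0" by auto
  define a where "a = d / g"
  have a: "a > 0" using g assms by (simp add: a_def)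
  define M where "M = exp (d - g - g * ln a)"
  show ?thesis
  proof (intro exI[of _ M] conjI allI impI)
    show "M > 0" by (simp add: M_def)
    fix x :: real assume x: "0 \<le> x"
    have "ln (a*(1+x)) \<le> a*(1+x) - 1" using a x by (intro ln_le_minus_one) auto
    moreover have "ln (a*(1+x)) = ln a + ln (1+x)" using a x by (simp add: ln_mult)
    ultimately have "g * ln (1+x) \<le> g * (a*(1+x) - 1 - ln a)" using g by (intro mult_left_mono) auto
    also have "\<dots> = d*x + (d - g - g*ln a)" using g by (simp add: a_def field_simps)
    finally have "exp (g * ln (1+x)) \<le> exp (d*x + (d - g - g*ln a))" by simp
    then show "(1+x) powr g \<le> M * exp (d*x)" using x
      by (simp add: powr_def M_def exp_add mult.commute)
  qed
qed

lemma cont_bound: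
  fixes h :: "complex \<Rightarrow> complex"
  assumes "continuous_on UNIV h"
  shows "\<exists>B\<ge>0. \<forall>z. norm z \<le> R \<longrightarrow> norm (h z) \<le> B"
proof -
  have "compact (h ` cball 0 R)"
    by (rule compact_continuous_image) (use assms continuous_on_subset in auto)
  then obtain B where "B > 0" "\<forall>y\<in>h ` cball 0 R. norm y \<le> B"
    using compact_imp_bounded bounded_pos by metis
  then show ?thesis by (intro exI[of _ B]) auto
qed

lemma scale_induct:
  fixes u W :: "complex \<Rightarrow> real" and p q K Rz :: real
  assumes "0 < p" "p \<le> q" "q < 1" "0 < Rz"
    and S: "\<And>z. z \<in> S \<Longrightarrow> of_real p * z \<in> S \<and> of_real q * z \<in> S"
    and base: "\<And>z. z \<in> S \<Longrightarrow> norm z \<le> Rz \<Longrightarrow> u z \<le> K * W z"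
    and step: "\<And>z. z \<in> S \<Longrightarrow> norm z > Rz \<Longrightarrow> u (of_real p * z) \<le> K * W (of_real p * z)
          \<Longrightarrow> u (of_real q * z) \<le> K * W (of_real q * z) \<Longrightarrow> u z \<le> K * W z"
  shows "\<forall>z\<in>S. u z \<le> K * W z"
proof -
  have q: "0 < q" using assms by linarith
  have I: "\<forall>z\<in>S. norm z \<le> Rz * (1/q)^n \<longrightarrow> u z \<le> K * W z" for n
  proof (induction n)
    case 0 then show ?case using base by auto
  next
    case (Suc n)
    show ?case
    proof (intro ballI impI)
      fix z assume z: "z \<in> S" "norm z \<le> Rz * (1/q)^Suc n"
      show "u z \<le> K * W z"
      proof (cases "norm z \<le> Rz")
        case True then show ?thesis using base z by auto
      next
        case False
        have nq: "norm (of_real q * z) \<le> Rz * (1/q)^n"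
        proof -
          have "norm (of_real q * z) = q * norm z" using q by (simp add: norm_mult)
          also have "\<dots> \<le> q * (Rz * (1/q)^Suc n)" using z q by (intro mult_left_mono) auto
          also have "\<dots> = Rz * (1/q)^n" using q by (simp add: field_simps)
          finally show ?thesis .
        qed
        have np: "norm (of_real p * z) \<le> Rz * (1/q)^n"
        proof -
          have "norm (of_real p * z) = p * norm z" using assms by (simp add: norm_mult)
          also have "\<dots> \<le> q * norm z" using assms by (intro mult_right_mono) auto
          also have "\<dots> = norm (of_real q * z)" using q by (simp add: norm_mult)
          finally show ?thesis using nq by linarith
        qed
        show ?thesis using step[OF z(1)] False Suc.IH S[OF z(1)] nq np by auto
      qed
    qed
  qed
  show ?thesis
  proof
    fix z assume z: "z \<in> S"
    have "1 < 1/q" using q assms by simp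
    then obtain n where "norm z / Rz < (1/q)^n" using real_arch_pow by blast
    then have "norm z \<le> Rz * (1/q)^n" using assms by (simp add: field_simps)
    then show "u z \<le> K * W z" using I z by blast
  qed
qed



definition Pin :: "(complex \<Rightarrow> complex) \<Rightarrow> real \<Rightarrow> real \<Rightarrow> real \<Rightarrow> bool" where
  "Pin f e g C \<longleftrightarrow> 0 \<le> C \<and> (\<forall>z. \<bar>Arg z\<bar> \<le> e \<longrightarrow> norm (f z) \<le> C * (1 + norm z) powr g)"

definition Pout :: "(complex \<Rightarrow> complex) \<Rightarrow> real \<Rightarrow> real \<Rightarrow> real \<Rightarrow> bool" where
  "Pout f e d C \<longleftrightarrow> 0 \<le> C \<and> (\<forall>z. e \<le> \<bar>Arg z\<bar> \<longrightarrow> norm (exp z * f z) \<le> C * exp ((1 - d) * norm z))"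

lemma shrink:
  assumes "Pin f e g C" "Pout f e d C'" "0 < e1" "e1 \<le> e" "e1 \<le> 1" "0 \<le> g"
  shows "\<exists>C''. Pout f e1 (min d ((1 - cos e1)/2)) C''"
proof -
  define d' where "d' = (1 - cos e1)/2"
  have "cos e1 < cos 0" using assms pi_gt3 by (intro cos_monotone_0_pi) auto
  then have d': "d' > 0" by (simp add: d'_def)
  obtain M where M: "M > 0" "\<And>x. x \<ge> 0 \<Longrightarrow> (1+x) powr g \<le> M * exp (d'*x)"
    using poly_exp_bound[OF assms(6) d'] by blast
  define d1 where "d1 = min d d'"
  have C: "0 \<le> C" "0 \<le> C'" using assms(1,2) by (auto simp: Pin_def Pout_def)
  show ?thesis unfolding d'_def[symmetric] d1_def[symmetric] Pout_def
  proof (intro exI[of _ "C' + C*M"] conjI allI impI)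
    show "0 \<le> C' + C*M" using C M by simp
    fix z :: complex assume z: "e1 \<le> \<bar>Arg z\<bar>"
    show "norm (exp z * f z) \<le> (C' + C*M) * exp ((1 - d1) * norm z)"
    proof (cases "e \<le> \<bar>Arg z\<bar>")
      case True
      then have "norm (exp z * f z) \<le> C' * exp ((1 - d) * norm z)" using assms(2) by (auto simp: Pout_def)
      also have "\<dots> \<le> C' * exp ((1 - d1) * norm z)"
        using C by (intro mult_left_mono) (auto simp: d1_def intro!: mult_right_mono)
      also have "\<dots> \<le> (C' + C*M) * exp ((1 - d1) * norm z)"
        using C M by (intro mult_right_mono) auto
      finally show ?thesis .
    next
      case False
      have Re: "Re z \<le> norm z * cos e1" using Re_le_sector[OF z] assms by simp
      have "norm (exp z * f z) = exp (Re z) * norm (f z)" by (simp add: norm_mult)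
      also have "\<dots> \<le> exp (norm z * cos e1) * (C * (1 + norm z) powr g)"
        using False assms(1) Re by (intro mult_mono) (auto simp: Pin_def)
      also have "\<dots> \<le> exp (norm z * cos e1) * (C * (M * exp (d' * norm z)))"
        using M C by (intro mult_left_mono) auto
      also have "\<dots> = C*M * exp ((1 - d') * norm z)"
        by (simp add: d'_def field_simps flip: exp_add)
      also have "\<dots> \<le> C*M * exp ((1 - d1) * norm z)"
        using C M by (intro mult_left_mono) (auto simp: d1_def intro!: mult_right_mono)
      also have "\<dots> \<le> (C' + C*M) * exp ((1 - d1) * norm z)"
        using C M by (intro mult_right_mono) auto
      finally show ?thesis .
    qed
  qed
qed

lemma log_plus_pos: "x \<ge> 1 \<Longrightarrow> log_plus x > 0"
  by (simp add: log_plus_def)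

lemma powlog_bound:
  fixes x a b :: real
  assumes "x \<ge> 1"
  shows "x powr a * log_plus x powr b \<le> (ln 2 powr b + 1) * (1+x) powr (\<bar>a\<bar> + \<bar>b\<bar>)"
proof -
  have 1: "x powr a \<le> (1+x) powr \<bar>a\<bar>"
  proof -
    have "x powr a \<le> x powr \<bar>a\<bar>" using assms by (intro powr_mono) auto
    also have "\<dots> \<le> (1+x) powr \<bar>a\<bar>" using assms by (intro powr_mono2) auto
    finally show ?thesis .
  qed
  have lp: "log_plus x \<ge> ln 2" "log_plus x \<le> 1 + x" using assms
    by (auto simp: log_plus_def intro: order.trans[OF ln_le_minus_one])
  have 2: "log_plus x powr b \<le> (ln 2 powr b + 1) * (1+x) powr \<bar>b\<bar>"
  proof (cases "b \<ge> 0")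
    case True
    have "log_plus x powr b \<le> (1+x) powr b" using lp True assms
      by (intro powr_mono2) (auto simp: log_plus_def)
    also have "\<dots> = 1 * (1+x) powr \<bar>b\<bar>" using True by simp
    also have "\<dots> \<le> (ln 2 powr b + 1) * (1+x) powr \<bar>b\<bar>"
      by (intro mult_right_mono) auto
    finally show ?thesis .
  next
    case False
    have "log_plus x powr b \<le> ln 2 powr b" using lp False by (intro powr_mono2') auto
    also have "\<dots> \<le> (ln 2 powr b + 1) * 1" by simp
    also have "\<dots> \<le> (ln 2 powr b + 1) * (1+x) powr \<bar>b\<bar>"
      using assms by (intro mult_left_mono ge_one_powr_ge_zero) auto
    finally show ?thesis .
  qed
  have "x powr a * log_plus x powr b \<le> (1+x) powr \<bar>a\<bar> * ((ln 2 powr b + 1) * (1+x) powr \<bar>b\<bar>)"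
    using 1 2 by (intro mult_mono) auto
  also have "\<dots> = (ln 2 powr b + 1) * (1+x) powr (\<bar>a\<bar> + \<bar>b\<bar>)" by (simp add: powr_add)
  finally show ?thesis .
qed



lemma P_to_adm:
  assumes "f holomorphic_on UNIV" "0 < e" "0 < d" "d < 1" "0 \<le> g" "Pin f e g C" "Pout f e d C'"
  shows "JS_admissible f"
proof -
  have C: "0 \<le> C" using assms(6) by (simp add: Pin_def)
  have I: "\<forall>z. norm z \<ge> 1 \<and> \<bar>Arg z\<bar> \<le> e \<longrightarrow>
     norm (f z) \<le> (C * 2 powr g) * norm z powr g * log_plus (norm z) powr 0"
  proof (intro allI impI)
    fix z :: complex assume z: "1 \<le> norm z \<and> \<bar>Arg z\<bar> \<le> e"
    have "norm (f z) \<le> C * (1 + norm z) powr g" using assms(6) z by (simp add: Pin_def)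
    also have "(1 + norm z) powr g \<le> (2 * norm z) powr g" using z assms by (intro powr_mono2) auto
    also have "(2 * norm z) powr g = 2 powr g * norm z powr g" by (simp add: powr_mult)
    finally have "norm (f z) \<le> C * (2 powr g * norm z powr g)" using C by (simp add: mult_left_mono)
    moreover have "log_plus (norm z) powr 0 = 1" using log_plus_pos[of "norm z"] z by simp
    ultimately show "norm (f z) \<le> C * 2 powr g * norm z powr g * log_plus (norm z) powr 0" by (simp add: mult.assoc)
  qed
  have O: "\<forall>z. norm z \<ge> 1 \<and> e \<le> \<bar>Arg z\<bar> \<and> \<bar>Arg z\<bar> \<le> pi \<longrightarrow>
            norm (exp z * f z) \<le> C' * exp ((1 - d) * norm z)"
    using assms(7) by (simp add: Pout_def)
  show ?thesis unfolding JS_admissible_def using assms(1-4) I O by blast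
qed

lemma adm_to_P:
  assumes "JS_admissible f"
  shows "\<exists>e>0. e \<le> 1 \<and> (\<exists>d. 0 < d \<and> d < 1 \<and> (\<exists>g\<ge>0. \<exists>C. Pin f e g C) \<and> (\<exists>C. Pout f e d C))"
proof -
  from assms obtain e e' a b C1 C2 where hol: "f holomorphic_on UNIV" and e: "e > 0" "0 < e'" "e' < 1"
    and I: "\<And>z. norm z \<ge> 1 \<Longrightarrow> \<bar>Arg z\<bar> \<le> e \<Longrightarrow> norm (f z) \<le> C1 * norm z powr a * log_plus (norm z) powr b"
    and O: "\<And>z. norm z \<ge> 1 \<Longrightarrow> e \<le> \<bar>Arg z\<bar> \<Longrightarrow> \<bar>Arg z\<bar> \<le> pi \<Longrightarrow> norm (exp z * f z) \<le> C2 * exp ((1 - e') * norm z)"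
    unfolding JS_admissible_def by blast
  have "continuous_on UNIV f" using hol holomorphic_on_imp_continuous_on by blast
  then obtain B where B: "B \<ge> 0" "\<And>z. norm z \<le> 1 \<Longrightarrow> norm (f z) \<le> B" using cont_bound by blast
  define g where "g = \<bar>a\<bar> + \<bar>b\<bar>"
  define L where "L = ln 2 powr b + 1"
  have L: "L > 0" unfolding L_def by (simp add: add_nonneg_pos)
  have g: "g \<ge> 0" by (simp add: g_def)
  have Pin: "Pin f e g (\<bar>C1\<bar> * L + B)" unfolding Pin_def
  proof (intro conjI allI impI)
    show "0 \<le> \<bar>C1\<bar> * L + B" using L B by simp
    fix z :: complex assume z: "\<bar>Arg z\<bar> \<le> e"
    have pos: "1 \<le> (1 + norm z) powr g" using g by (intro ge_one_powr_ge_zero) auto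
    show "norm (f z) \<le> (\<bar>C1\<bar> * L + B) * (1 + norm z) powr g"
    proof (cases "norm z \<ge> 1")
      case True
      have "norm (f z) \<le> C1 * norm z powr a * log_plus (norm z) powr b" using I True z by blast
      also have "\<dots> \<le> \<bar>C1\<bar> * (norm z powr a * log_plus (norm z) powr b)"
        by (simp add: mult.assoc abs_mult_pos' mult_right_mono)
      also have "\<dots> \<le> \<bar>C1\<bar> * (L * (1 + norm z) powr g)"
        using powlog_bound[OF True, of a b] by (intro mult_left_mono) (auto simp: L_def g_def)
      also have "\<dots> \<le> (\<bar>C1\<bar> * L + B) * (1 + norm z) powr g"
        using B by (simp add: algebra_simps)
      finally show ?thesis .
    next
      case False
      then have "norm (f z) \<le> B" using B by auto
      also have "\<dots> \<le> B * (1 + norm z) powr g" using B pos by (simp add: mult_le_cancel_left1)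
      also have "\<dots> \<le> (\<bar>C1\<bar> * L + B) * (1 + norm z) powr g"
        using L pos by (intro mult_right_mono) auto
      finally show ?thesis .
    qed
  qed
  have Pout: "Pout f e e' (\<bar>C2\<bar> + exp 1 * B)" unfolding Pout_def
  proof (intro conjI allI impI)
    show "0 \<le> \<bar>C2\<bar> + exp 1 * B" using B by simp
    fix z :: complex assume z: "e \<le> \<bar>Arg z\<bar>"
    have pos: "1 \<le> exp ((1 - e') * norm z)" using e by simp
    show "norm (exp z * f z) \<le> (\<bar>C2\<bar> + exp 1 * B) * exp ((1 - e') * norm z)"
    proof (cases "norm z \<ge> 1")
      case True
      have "norm (exp z * f z) \<le> C2 * exp ((1 - e') * norm z)"
        using O[OF True z] Arg_bounded[of z] by auto
      also have "\<dots> \<le> (\<bar>C2\<bar> + exp 1 * B) * exp ((1 - e') * norm z)"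
        using B by (intro mult_right_mono) (smt (verit) exp_gt_zero mult_nonneg_nonneg, simp)
      finally show ?thesis .
    next
      case False
      have "Re z \<le> 1" using False complex_Re_le_cmod[of z] by linarith
      then have "norm (exp z * f z) \<le> exp 1 * B"
        using B False by (auto simp: norm_mult intro!: mult_mono)
      also have "\<dots> \<le> (\<bar>C2\<bar> + exp 1 * B) * 1" using B by simp
      also have "\<dots> \<le> (\<bar>C2\<bar> + exp 1 * B) * exp ((1 - e') * norm z)"
        using B pos by (intro mult_left_mono) auto
      finally show ?thesis .
    qed
  qed
  define e1 where "e1 = min e 1"
  have e1: "0 < e1" "e1 \<le> e" "e1 \<le> 1" using e by (auto simp: e1_def)
  obtain C' where C': "Pout f e1 (min e' ((1 - cos e1)/2)) C'" using shrink[OF Pin Pout e1 g] by blast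
  have "cos e1 < cos 0" using e1 pi_gt3 by (intro cos_monotone_0_pi) auto
  then have "0 < min e' ((1 - cos e1)/2)" "min e' ((1 - cos e1)/2) < 1" using e by auto
  moreover have "Pin f e1 g (\<bar>C1\<bar> * L + B)" using Pin e1 by (auto simp: Pin_def)
  ultimately show ?thesis using e1 C' g by blast
qed



lemma exp_split:
  fixes z :: complex
  assumes "q = 1 - p"
  shows "exp z = exp (of_real p * z) * exp (of_real q * z)"
proof -
  have "of_real p * z + of_real q * z = of_real (p+q) * z" by (simp add: distrib_right)
  then have "z = of_real p * z + of_real q * z" using assms by simp
  then show ?thesis by (metis exp_add)
qed

lemma FE_G:
  fixes z :: complex
  assumes "q = 1 - p"
    and FE: "f z = (1 - exp (- of_real p * z)) * f (of_real p * z)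
                 + exp (- of_real p * z) * f (of_real q * z) + g z"
  shows "exp z * g z = exp z * f z - (exp (of_real q * z) - exp (of_real (q - p) * z)) * (exp (of_real p * z) * f (of_real p * z))
           - exp (of_real q * z) * f (of_real q * z)"
proof -
  have e: "exp z = exp (of_real p * z) * exp (of_real q * z)" using exp_split[OF assms(1)] .
  have e2: "exp (- of_real p * z) * exp (of_real p * z) = 1" by (metis exp_minus_inverse mult.commute mult_minus_left)
  have e3: "exp (of_real p * z) * exp (- of_real p * z) = 1" using exp_minus_inverse[of "of_real p * z"] by simp
  have "g z = f z - (1 - exp (- of_real p * z)) * f (of_real p * z) - exp (- of_real p * z) * f (of_real q * z)"
    using FE by (simp add: algebra_simps)
  then have "exp z * g z = exp z * (f z - (1 - exp (- of_real p * z)) * f (of_real p * z) - exp (- of_real p * z) * f (of_real q * z))"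
    by simp
  also have "\<dots> = exp z * f z - exp z * (1 - exp (- of_real p * z)) * f (of_real p * z)
       - exp z * exp (- of_real p * z) * f (of_real q * z)" by (simp add: algebra_simps)
  also have "exp z * exp (- of_real p * z) = exp (of_real q * z)"
  proof -
    have "z + (- of_real p * z) = of_real q * z" using assms(1) by (simp add: of_real_diff left_diff_distrib)
    then show ?thesis by (metis exp_add)
  qed
  also have "exp z * (1 - exp (- of_real p * z)) = (exp (of_real q * z) - exp (of_real (q - p) * z)) * exp (of_real p * z)"
  proof -
    define a where "a = of_real p * z"
    define b where "b = of_real q * z"
    have z: "z = a + b" unfolding a_def b_def using assms(1) by (simp add: of_real_diff left_diff_distrib)
    have qp: "of_real (q - p) * z = b - a" unfolding a_def b_def by (simp add: of_real_diff left_diff_distrib)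
    have "exp (a+b) * (1 - exp (-a)) = (exp b - exp (b - a)) * exp a"
      by (simp add: exp_add exp_diff exp_minus field_simps)
    moreover have e1: "exp z = exp (a+b)" using z by (rule arg_cong)
    moreover have e2: "- of_real p * z = -a" unfolding a_def by simp
    ultimately show ?thesis unfolding qp e2 by (simp only: a_def[symmetric] b_def[symmetric])
  qed
  finally show ?thesis by (simp add: algebra_simps)
qed

lemma norm3: "norm (a - b - c :: complex) \<le> norm a + norm b + norm c"
proof -
  have "norm (a - b - c) \<le> norm (a - b) + norm c" by (rule norm_triangle_ineq4)
  also have "norm (a - b) \<le> norm a + norm b" by (rule norm_triangle_ineq4)
  finally show ?thesis by simp
qed

lemma norm_scale: "0 < p \<Longrightarrow> norm (of_real p * (z::complex)) = p * norm z"
  by (simp add: norm_mult)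

lemma dir1:
  fixes p q :: real
  assumes pq: "0 < p" "q = 1 - p" "p \<le> q"
    and FE: "\<And>z. f z = (1 - exp (- of_real p * z)) * f (of_real p * z)
                 + exp (- of_real p * z) * f (of_real q * z) + g z"
    and e: "0 < e" "e \<le> 1" and gam: "0 \<le> gam" and d: "0 < d" "d < 1"
    and Pi: "Pin f e gam C" and Po: "Pout f e d C'"
  shows "Pin g e gam (4*C)" "Pout g e (d*p) (4*C')"
proof -
  have q: "0 < q" "q < 1" using pq by auto
  have C: "0 \<le> C" "0 \<le> C'" using Pi Po by (auto simp: Pin_def Pout_def)
  have cpos: "0 \<le> cos e" using e pi_gt3 by (intro cos_ge_zero) auto
  show "Pin g e gam (4*C)" unfolding Pin_def
  proof (intro conjI allI impI)
    show "0 \<le> 4*C" using C by simp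
    fix z :: complex assume z: "\<bar>Arg z\<bar> \<le> e"
    define X where "X = (1 + norm z) powr gam"
    have Re: "0 \<le> Re z" using Re_ge_sector[OF z] e pi_gt3 cpos
      by (smt (verit) mult_nonneg_nonneg norm_ge_zero)
    have E: "norm (exp (- of_real p * z)) \<le> 1" using Re pq by simp
    have E2: "norm (1 - exp (- of_real p * z)) \<le> 2"
      using norm_triangle_ineq4[of 1 "exp (- of_real p * z)"] E by (simp del: norm_exp_eq_Re)
    have fz: "norm (f z) \<le> C * X" using Pi z by (simp add: Pin_def X_def)
    have fs: "norm (f (of_real s * z)) \<le> C * X" if s: "0 < s" "s \<le> 1" for s
    proof -
      have "norm (f (of_real s * z)) \<le> C * (1 + norm (of_real s * z)) powr gam"
        using Pi z s by (simp add: Pin_def)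
      also have "\<dots> \<le> C * X" unfolding X_def using s C gam
        by (intro mult_left_mono powr_mono2) (auto simp: norm_mult intro!: mult_left_le_one_le)
      finally show ?thesis .
    qed
    have "g z = f z - (1 - exp (- of_real p * z)) * f (of_real p * z) - exp (- of_real p * z) * f (of_real q * z)"
      using FE[of z] by (simp add: algebra_simps)
    then have "norm (g z) \<le> norm (f z) + norm (1 - exp (- of_real p * z)) * norm (f (of_real p * z))
        + norm (exp (- of_real p * z)) * norm (f (of_real q * z))"
      using norm3 by (metis norm_mult)
    also have "\<dots> \<le> C * X + 2 * (C * X) + 1 * (C * X)"
      using fz fs[of p] fs[of q] pq q E E2 by (intro add_mono mult_mono) auto
    finally show "norm (g z) \<le> 4 * C * (1 + norm z) powr gam" by (simp add: X_def)
  qed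
  show "Pout g e (d*p) (4*C')" unfolding Pout_def
  proof (intro conjI allI impI)
    show "0 \<le> 4*C'" using C by simp
    fix z :: complex assume z: "e \<le> \<bar>Arg z\<bar>"
    define x where "x = norm z"
    have x: "0 \<le> x" by (simp add: x_def)
    define F where "F = (\<lambda>w. exp w * f w)"
    have Fs: "norm (F (of_real s * z)) \<le> C' * exp ((1 - d) * s * x)" if s: "0 < s" for s
    proof -
      have "e \<le> \<bar>Arg (of_real s * z)\<bar>" using z s by simp
      then have "norm (F (of_real s*z)) \<le> C' * exp((1-d) * norm (of_real s * z))"
        using Po unfolding Pout_def F_def by blast
      then show ?thesis using s by (simp add: norm_mult mult.assoc x_def)
    qed
    have Fz: "norm (F z) \<le> C' * exp ((1 - d) * x)" using Po z by (simp add: Pout_def F_def x_def)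
    have Eq: "norm (exp (of_real q * z) - exp (of_real (q - p) * z)) \<le> 2 * exp (q * x)"
    proof -
      have A: "norm (exp (of_real q * z) - exp (of_real (q - p) * z)) \<le> norm (exp (of_real q * z)) + norm (exp (of_real (q - p) * z))"
        by (rule norm_triangle_ineq4)
      have "Re z \<le> x" using complex_Re_le_cmod x_def by simp
      then have 1: "q * Re z \<le> q * x" "(q - p) * Re z \<le> (q - p) * x" using q pq
        by (auto intro!: mult_left_mono)
      have "(q - p) * x \<le> q * x" using pq x by (simp add: algebra_simps)
      with 1 have "q * Re z \<le> q * x" "(q - p) * Re z \<le> q * x" by linarith+
      then have "norm (exp (of_real q * z)) \<le> exp (q * x)" "norm (exp (of_real (q - p) * z)) \<le> exp (q * x)"
        by simp_all
      with A show ?thesis by linarith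
    qed
    have "exp z * g z = F z - (exp (of_real q * z) - exp (of_real (q - p) * z)) * F (of_real p * z) - F (of_real q * z)"
      unfolding F_def using FE_G[where f=f and g=g and z=z and p=p and q=q, OF pq(2) FE[of z]] .
    then have "norm (exp z * g z) \<le> norm (F z) + norm (exp (of_real q * z) - exp (of_real (q - p) * z)) * norm (F (of_real p * z))
          + norm (F (of_real q * z))"
      using norm3 by (metis norm_mult)
    also have "\<dots> \<le> C' * exp ((1 - d) * x) + (2 * exp (q * x)) * (C' * exp ((1 - d) * p * x))
          + C' * exp ((1 - d) * q * x)"
      using Fz Fs[of p] Fs[of q] Eq pq q by (intro add_mono mult_mono) auto
    also have "\<dots> = C' * exp ((1 - d) * x) + 2 * C' * exp ((1 - d*p) * x) + C' * exp ((1 - d) * p * x) * 0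
          + C' * exp ((1 - d) * q * x)"
    proof -
      have "p*x + q*x = x" using pq by (metis add_diff_cancel_left' diff_add_cancel distrib_right mult_1)
      then show ?thesis by (simp add: algebra_simps flip: exp_add)
    qed
    also have "\<dots> \<le> C' * exp ((1 - d*p) * x) + 2 * C' * exp ((1 - d*p) * x) + C' * exp ((1 - d*p) * x) * 0
          + C' * exp ((1 - d*p) * x)"
    proof -
      have a: "(1 - d) * x \<le> (1 - d*p) * x" using x d pq q
        by (intro mult_right_mono) (auto simp: mult_le_cancel_left1)
      have b: "(1 - d) * p * x \<le> (1 - d*p) * x" using x d pq q
        by (intro mult_right_mono) (auto simp: algebra_simps)
      have "d*p \<le> d*q" using pq d by (intro mult_left_mono) auto
      moreover have "(1-d)*q = q - d*q" by (simp add: algebra_simps)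
      ultimately have "(1-d)*q \<le> 1 - d*p" using pq by linarith
      then have c: "(1 - d) * q * x \<le> (1 - d*p) * x" using x
        by (intro mult_right_mono) auto
      show ?thesis using a c C by (intro add_mono mult_left_mono) auto
    qed
    finally show "norm (exp z * g z) \<le> 4 * C' * exp ((1 - d * p) * norm z)" by (simp add: x_def)
  qed
qed



lemma norm3p: "norm (a + b + c :: complex) \<le> norm a + norm b + norm c"
  by (smt (verit) norm_triangle_ineq)

lemma dir2_in:
  fixes p q :: real
  assumes pq: "0 < p" "q = 1 - p" "p \<le> q"
    and FE: "\<And>z. f z = (1 - exp (- of_real p * z)) * f (of_real p * z)
                 + exp (- of_real p * z) * f (of_real q * z) + g z"
    and hol: "f holomorphic_on UNIV"
    and e: "0 < e" "e \<le> 1" and gam: "0 \<le> gam" and Pi: "Pin g e gam D"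
  shows "\<exists>n C. Pin f e (real n) C"
proof -
  have q: "0 < q" "q < 1" using pq by auto
  define c where "c = cos e"
  have c: "0 < c" unfolding c_def using e pi_gt3 by (intro cos_gt_zero_pi) auto
  define \<rho> where "\<rho> = (1+q)/2"
  have \<rho>: "0 < \<rho>" "\<rho> < 1" using q by (auto simp: \<rho>_def)
  obtain n0 where n0: "\<rho>^n0 < 1/4" using real_arch_pow_inv[of "1/4" \<rho>] \<rho> by auto
  define n where "n = n0 + nat \<lceil>gam\<rceil>"
  have "\<rho>^n \<le> \<rho>^n0" using \<rho> by (intro power_decreasing) (auto simp: n_def)
  then have rn: "\<rho>^n \<le> 1/4" using n0 by linarith
  have gn: "gam \<le> real n" unfolding n_def by linarith
  define R0 where "R0 = max 1 (ln 4 / (p*c))"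
  have R0: "1 \<le> R0" "ln 4 / (p*c) \<le> R0" by (auto simp: R0_def)
  have "continuous_on UNIV f" using hol holomorphic_on_imp_continuous_on by blast
  then obtain B where B: "B \<ge> 0" "\<And>z. norm z \<le> R0 \<Longrightarrow> norm (f z) \<le> B" using cont_bound by blast
  have D: "0 \<le> D" using Pi by (simp add: Pin_def)
  define K where "K = 2*D + B"
  have K: "0 \<le> K" "2*D \<le> K" "B \<le> K" using B D by (auto simp: K_def)
  define S where "S = {z. \<bar>Arg z\<bar> \<le> e}"
  have main: "\<forall>z\<in>S. norm (f z) \<le> K * (1 + norm z)^n"
  proof (rule scale_induct[where p=p and q=q and Rz=R0])
    show "0 < p" "p \<le> q" "q < 1" "0 < R0" using pq q R0 by auto
    fix z assume z: "z \<in> S"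
    show "of_real p * z \<in> S \<and> of_real q * z \<in> S"
      unfolding S_def using z Arg_times_of_real[OF pq(1), of z] Arg_times_of_real[OF q(1), of z] by (simp add: S_def)
    {
      assume "norm z \<le> R0"
      then have "norm (f z) \<le> K" using B K by force
      also have "K \<le> K * (1 + norm z)^n" using K by (simp add: mult_le_cancel_left1 one_le_power)
      finally show "norm (f z) \<le> K * (1 + norm z)^n" .
    }
    assume zR: "norm z > R0"
      and ihp: "norm (f (of_real p * z)) \<le> K * (1 + norm (of_real p * z))^n"
      and ihq: "norm (f (of_real q * z)) \<le> K * (1 + norm (of_real q * z))^n"
    define x where "x = norm z"
    have x: "1 \<le> x" "ln 4 / (p*c) \<le> x" using zR R0 by (auto simp: x_def)
    define X where "X = (1 + x)^n"
    have X: "0 \<le> X" by (simp add: X_def x_def)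
    have qx: "(1 + q*x)^n \<le> X/4"
    proof -
      have "(1-q)*1 \<le> (1-q)*x" using x q by (intro mult_left_mono) auto
      then have "1 + q*x \<le> \<rho> * (1 + x)" by (simp add: \<rho>_def field_simps)
      then have "(1 + q*x)^n \<le> (\<rho> * (1 + x))^n" using q x by (intro power_mono) auto
      also have "\<dots> = \<rho>^n * X" by (simp add: X_def power_mult_distrib)
      also have "\<dots> \<le> 1/4 * X" using rn X by (intro mult_right_mono) auto
      finally show ?thesis by simp
    qed
    have px: "(1 + p*x)^n \<le> X/4"
    proof -
      have "p*x \<le> q*x" using pq x by (intro mult_right_mono) auto
      then have "(1 + p*x)^n \<le> (1 + q*x)^n" using pq x by (intro power_mono) auto
      then show ?thesis using qx by linarith
    qed
    have fp: "norm (f (of_real p * z)) \<le> K * (X/4)"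
    proof -
      have "norm (f (of_real p * z)) \<le> K*(1+p*x)^n" using ihp norm_scale[OF pq(1), of z] by (simp add: x_def)
      also have "\<dots> \<le> K * (X/4)" using px K by (intro mult_left_mono)
      finally show ?thesis .
    qed
    have fq: "norm (f (of_real q * z)) \<le> K * (X/4)"
    proof -
      have "norm (f (of_real q * z)) \<le> K*(1+q*x)^n" using ihq norm_scale[OF q(1), of z] by (simp add: x_def)
      also have "\<dots> \<le> K * (X/4)" using qx K by (intro mult_left_mono)
      finally show ?thesis .
    qed
    have Re: "x * c \<le> Re z" using Re_ge_sector[of z e] z e pi_gt3 by (simp add: S_def x_def c_def)
    have "ln 4 \<le> p * c * x" using x pq c by (simp add: field_simps)
    also have "\<dots> \<le> p * Re z" using Re pq by (simp add: mult.assoc mult.commute mult_left_mono)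
    finally have "exp (- (p * Re z)) \<le> exp (- ln 4)" by simp
    then have eta: "norm (exp (- of_real p * z)) \<le> 1/4" by (simp add: exp_minus[of "ln 4"])
    have eta2: "norm (1 - exp (- of_real p * z)) \<le> 5/4"
      using norm_triangle_ineq4[of 1 "exp (- of_real p * z)"] eta by (simp del: norm_exp_eq_Re)
    have gz: "norm (g z) \<le> D * X"
    proof -
      have "norm (g z) \<le> D * (1 + x) powr gam" using Pi z by (simp add: Pin_def S_def x_def)
      also have "(1 + x) powr gam \<le> (1 + x) powr real n" using gn x by (intro powr_mono) auto
      also have "\<dots> = X" using x by (simp add: X_def powr_realpow)
      finally show ?thesis using D by (simp add: mult_left_mono)
    qed
    have "norm (f z) \<le> norm ((1 - exp (- of_real p * z)) * f (of_real p * z))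
       + norm (exp (- of_real p * z) * f (of_real q * z)) + norm (g z)"
      using norm3p FE[of z] by metis
    also have "\<dots> \<le> 5/4 * (K * (X/4)) + 1/4 * (K * (X/4)) + D * X"
      unfolding norm_mult using eta eta2 fp fq gz by (intro add_mono mult_mono) auto
    also have "\<dots> \<le> K * X"
    proof -
      have "(2*D) * X \<le> K * X" using K X by (intro mult_right_mono) auto
      moreover have "0 \<le> K * X" using K X by simp
      ultimately show ?thesis by (simp add: algebra_simps)
    qed
    finally show "norm (f z) \<le> K * (1 + norm z)^n" by (simp add: X_def x_def)
  qed
  have "Pin f e (real n) K" unfolding Pin_def
  proof (intro conjI allI impI)
    show "0 \<le> K" by fact
    fix z :: complex assume "\<bar>Arg z\<bar> \<le> e"
    then have "norm (f z) \<le> K * (1 + norm z)^n" using main by (simp add: S_def)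
    then show "norm (f z) \<le> K * (1 + norm z) powr real n"
      by (simp add: powr_realpow add_pos_nonneg)
  qed
  then show ?thesis by blast
qed



lemma dir2_out:
  fixes p q :: real
  assumes pq: "0 < p" "q = 1 - p" "p \<le> q"
    and FE: "\<And>z. f z = (1 - exp (- of_real p * z)) * f (of_real p * z)
                 + exp (- of_real p * z) * f (of_real q * z) + g z"
    and hol: "f holomorphic_on UNIV"
    and e: "0 < e" "e \<le> 1" and d: "0 < d" "d < 1" and Po: "Pout g e d Cg"
  shows "\<exists>\<delta> C. 0 < \<delta> \<and> \<delta> < 1 \<and> Pout f e \<delta> C"
proof -
  have q: "0 < q" "q < 1" using pq by auto
  define c where "c = cos e"
  have c: "0 < c" unfolding c_def using e pi_gt3 by (intro cos_gt_zero_pi) auto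
  have c1: "c < 1" unfolding c_def using e pi_gt3 cos_monotone_0_pi[of 0 e] by auto
  define \<delta> where "\<delta> = min d ((1-c)/2)"
  have \<delta>: "0 < \<delta>" "\<delta> \<le> d" "\<delta> \<le> (1-c)/2" "\<delta> < 1" using c c1 d unfolding \<delta>_def by (simp_all add: min_def)
  define \<kappa> where "\<kappa> = p * (1-c)/2"
  have \<kappa>: "0 < \<kappa>" using pq c1 by (simp add: \<kappa>_def)
  define R0 where "R0 = max 1 (ln 6 / \<kappa>)"
  have R0: "1 \<le> R0" "ln 6 / \<kappa> \<le> R0" by (auto simp: R0_def)
  define F where "F = (\<lambda>z. exp z * f z)"
  have "continuous_on UNIV f" using hol holomorphic_on_imp_continuous_on by blast
  then have "continuous_on UNIV F" unfolding F_def by (intro continuous_intros)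
  then obtain B where B: "B \<ge> 0" "\<And>z. norm z \<le> R0 \<Longrightarrow> norm (F z) \<le> B" using cont_bound by blast
  have Cg: "0 \<le> Cg" using Po by (simp add: Pout_def)
  define K where "K = 2*Cg + B"
  have K: "0 \<le> K" "2*Cg \<le> K" "B \<le> K" using B Cg by (auto simp: K_def)
  define S where "S = {z. e \<le> \<bar>Arg z\<bar>}"
  have main: "\<forall>z\<in>S. norm (F z) \<le> K * exp ((1-\<delta>) * norm z)"
  proof (rule scale_induct[where p=p and q=q and Rz=R0])
    show "0 < p" "p \<le> q" "q < 1" "0 < R0" using pq q R0 by auto
    fix z assume z: "z \<in> S"
    show "of_real p * z \<in> S \<and> of_real q * z \<in> S"
      unfolding S_def using z Arg_times_of_real[OF pq(1), of z] Arg_times_of_real[OF q(1), of z] by (simp add: S_def)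
    {
      assume "norm z \<le> R0"
      then have "norm (F z) \<le> K" using B K by force
      also have "K \<le> K * exp ((1-\<delta>) * norm z)" using K \<delta> by (simp add: mult_le_cancel_left1)
      finally show "norm (F z) \<le> K * exp ((1-\<delta>) * norm z)" .
    }
    assume zR: "norm z > R0"
      and ihp: "norm (F (of_real p * z)) \<le> K * exp ((1-\<delta>) * norm (of_real p * z))"
      and ihq: "norm (F (of_real q * z)) \<le> K * exp ((1-\<delta>) * norm (of_real q * z))"
    define x where "x = norm z"
    have x: "1 \<le> x" "ln 6 / \<kappa> \<le> x" using zR R0 by (auto simp: x_def)
    define W where "W = exp ((1-\<delta>) * x)"
    have W: "0 < W" by (simp add: W_def)
    have kx: "exp (- \<kappa> * x) \<le> 1/6"
    proof -
      have "ln 6 \<le> \<kappa> * x" using x \<kappa> by (simp add: field_simps)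
      then have "exp (- \<kappa> * x) \<le> exp (- ln 6)" by simp
      then show ?thesis by (simp add: exp_minus[of "ln 6"])
    qed
    have Re: "Re z \<le> x * c" using Re_le_sector[of e z] z e by (simp add: S_def x_def c_def)
    have coef: "norm (exp (of_real q * z) - exp (of_real (q - p) * z)) \<le> 2 * exp (q * c * x)"
    proof -
      have A: "norm (exp (of_real q * z) - exp (of_real (q - p) * z)) \<le> norm (exp (of_real q * z)) + norm (exp (of_real (q - p) * z))"
        by (rule norm_triangle_ineq4)
      have 1: "q * Re z \<le> q * (x * c)" "(q - p) * Re z \<le> (q - p) * (x * c)" using q pq Re
        by (auto intro!: mult_left_mono)
      have "(q - p) * (x*c) \<le> q * (x*c)" using pq x c by (simp add: algebra_simps)
      with 1 have "q * Re z \<le> q * c * x" "(q - p) * Re z \<le> q * c * x" by (simp_all add: ac_simps)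
      then have "norm (exp (of_real q * z)) \<le> exp (q * c * x)" "norm (exp (of_real (q - p) * z)) \<le> exp (q * c * x)"
        by simp_all
      with A show ?thesis by linarith
    qed
    have Fp: "norm (F (of_real p * z)) \<le> K * exp ((1-\<delta>) * p * x)"
      using ihp norm_scale[OF pq(1), of z] by (simp add: x_def mult.assoc)
    have Fq: "norm (F (of_real q * z)) \<le> K * exp ((1-\<delta>) * q * x)"
      using ihq norm_scale[OF q(1), of z] by (simp add: x_def mult.assoc)
    have E1: "exp (q * c * x) * exp ((1-\<delta>) * p * x) \<le> exp (- \<kappa> * x) * W"
    proof -
      have k: "\<kappa> \<le> q * (1-c)/2" unfolding \<kappa>_def using pq c1 by (intro divide_right_mono mult_right_mono) auto
      have dq: "\<delta> * q \<le> (1-c)/2 * q" using \<delta> q by (intro mult_right_mono) auto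
      have h: "q * c + \<kappa> - (1-\<delta>) * q \<le> 0" using k dq by (simp add: algebra_simps)
      have "x * (q * c + \<kappa> - (1-\<delta>) * q) \<le> 0" using h x by (simp add: mult_nonneg_nonpos)
      then have "q * c * x + (1-\<delta>) * p * x \<le> - \<kappa> * x + (1-\<delta>) * x"
        unfolding pq(2) by (simp add: algebra_simps)
      then show ?thesis by (simp add: W_def flip: exp_add)
    qed
    have E2: "exp ((1-\<delta>) * q * x) \<le> exp (- \<kappa> * x) * W"
    proof -
      have "(1-c)/2 \<le> 1 - \<delta>" using \<delta>(3) c by (simp add: field_simps)
      then have "\<kappa> \<le> (1-\<delta>) * p" unfolding \<kappa>_def using pq by (simp add: mult.commute mult_left_mono)
      then have "\<kappa> * x \<le> (1-\<delta>) * p * x" using x by (intro mult_right_mono) auto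
      then have "(1-\<delta>) * q * x \<le> - \<kappa> * x + (1-\<delta>) * x" unfolding pq(2) by (simp add: algebra_simps)
      then show ?thesis by (simp add: W_def flip: exp_add)
    qed
    have Gz: "norm (exp z * g z) \<le> Cg * W"
    proof -
      have "norm (exp z * g z) \<le> Cg * exp ((1-d) * x)" using Po z by (simp add: Pout_def S_def x_def)
      also have "\<dots> \<le> Cg * W" unfolding W_def using Cg \<delta> x by (intro mult_left_mono) (auto intro: mult_right_mono)
      finally show ?thesis .
    qed
    have "exp z * g z = F z - (exp (of_real q * z) - exp (of_real (q - p) * z)) * F (of_real p * z) - F (of_real q * z)"
      unfolding F_def using FE_G[where f=f and g=g and z=z and p=p and q=q, OF pq(2) FE[of z]] .
    then have "F z = exp z * g z + (exp (of_real q * z) - exp (of_real (q - p) * z)) * F (of_real p * z) + F (of_real q * z)"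
      by (simp add: algebra_simps)
    then have "norm (F z) \<le> norm (exp z * g z) + norm (exp (of_real q * z) - exp (of_real (q - p) * z)) * norm (F (of_real p * z))
          + norm (F (of_real q * z))"
      using norm3p by (metis norm_mult)
    also have "\<dots> \<le> Cg * W + (2 * exp (q * c * x)) * (K * exp ((1-\<delta>) * p * x)) + K * exp ((1-\<delta>) * q * x)"
      using Gz coef Fp Fq by (intro add_mono mult_mono) auto
    also have "\<dots> = Cg * W + 2 * K * (exp (q * c * x) * exp ((1-\<delta>) * p * x)) + K * exp ((1-\<delta>) * q * x)"
      by (simp add: algebra_simps)
    also have "\<dots> \<le> Cg * W + 2 * K * (exp (- \<kappa> * x) * W) + K * (exp (- \<kappa> * x) * W)"
      using E1 E2 K Cg by (intro add_mono mult_left_mono) auto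
    also have "\<dots> \<le> Cg * W + 2 * K * (1/6 * W) + K * (1/6 * W)"
      using kx K W by (intro add_mono mult_left_mono mult_right_mono) auto
    also have "\<dots> \<le> K * W"
    proof -
      have "(2*Cg) * W \<le> K * W" using K W by (intro mult_right_mono) auto
      moreover have "0 \<le> K * W" using K W by simp
      ultimately show ?thesis by (simp add: algebra_simps)
    qed
    finally show "norm (F z) \<le> K * exp ((1-\<delta>) * norm z)" by (simp add: W_def x_def)
  qed
  have "Pout f e \<delta> K" unfolding Pout_def
  proof (intro conjI allI impI)
    show "0 \<le> K" by fact
    fix z :: complex assume "e \<le> \<bar>Arg z\<bar>"
    then show "norm (exp z * f z) \<le> K * exp ((1-\<delta>) * norm z)" using main by (simp add: S_def F_def)
  qed
  then show ?thesis using \<delta> by blast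
qed


theorem mainTheorem10:
  fixes p q :: real and f g :: "complex \<Rightarrow> complex"
  assumes "0 < p" and "q = 1 - p" and "p \<le> q"
    and "f holomorphic_on UNIV" and "g holomorphic_on UNIV"
    and "\<And>z. f z = (1 - exp (- of_real p * z)) * f (of_real p * z)
                 + exp (- of_real p * z) * f (of_real q * z) + g z"
    and "f 0 = 0" and "g 0 = 0"
  shows "JS_admissible f \<longleftrightarrow> JS_admissible g"
proof
  assume "JS_admissible f"
  then obtain e d gam C C' where e: "0 < e" "e \<le> 1" and d: "0 < d" "d < 1" and gam: "0 \<le> gam"
    and Pi: "Pin f e gam C" and Po: "Pout f e d C'"
    using adm_to_P by blast
  have "Pin g e gam (4*C)" "Pout g e (d*p) (4*C')"
    using dir1[OF assms(1,2,3) assms(6) e gam d Pi Po] by auto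
  moreover have "0 < d*p" using d assms(1) by simp
  moreover have "d * p \<le> 1 * p" using d assms(1) by (intro mult_right_mono) auto
  then have "d*p < 1" using assms(1,2,3) by linarith
  ultimately show "JS_admissible g" using P_to_adm[OF assms(5) e(1) _ _ gam] by blast
next
  assume "JS_admissible g"
  then obtain e d gam D Cg where e: "0 < e" "e \<le> 1" and d: "0 < d" "d < 1" and gam: "0 \<le> gam"
    and Pi: "Pin g e gam D" and Po: "Pout g e d Cg"
    using adm_to_P by blast
  obtain n C where 1: "Pin f e (real n) C" using dir2_in[OF assms(1,2,3) assms(6) assms(4) e gam Pi] by blast
  obtain \<delta> C' where 2: "0 < \<delta>" "\<delta> < 1" "Pout f e \<delta> C'"
    using dir2_out[OF assms(1,2,3) assms(6) assms(4) e d Po] by blast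
  show "JS_admissible f" using P_to_adm[OF assms(4) e(1) 2(1,2) _ 1 2(3)] by simp
qed

end
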